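(* Let $R$ be a ranking profile over $m$ candidates and $\rhd$ a ranking that is pair-priceable for $R$. Then $\rhd$ satisfies strong proportional justified representation (sPJR) for $R$, i.e., for every subprofile $S$ of $R$, $$\Big|A(\rhd)\cap\bigcup_{\succ\in\mathcal{R}:S(\succ)>0}A(\succ)\Big|\geq\Big\lfloor|S|\binom{m}{2}\Big\rfloor.$$
   Context: Let $C$ be a set of $m$ candidates. A ranking is a strict linear order over $C$; $\mathcal{R}$ denotes the set of all rankings over $C$. A ranking profile is a function $R:\mathcal{R}\to[0,1]$ with $\sum_\succ R(\succ)=1$; a subprofile of $R$ is $S:\mathcal{R}\to[0,1]$ with $S(\succ)\leq R(\succ)$ for all $\succ$, and $|S|=\sum_\succ S(\succ)$. For a ranking $\succ$, $A(\succ)=\{(x,y)\in C\times C: x\succ y\}$. For $x\in X\subseteq C$, $u(\succ,x,X)=|\{y\in X\setminus\{x\}:x\succ y\}|$. A ranking $\rhd=x_1,\dots,x_m$ is pair-priceable for $R$ if there is $\pi:\mathcal{R}\times A(\rhd)\to[0,1]$ such that (1) $\pi(\succ,(x_i,x_j))\leq u(\succ,x_i,\{x_i,x_j\})$ for all $\succ$ and $(x_i,x_j)\in A(\rhd)$; (2) $\sum_{(x_i,x_j)\in A(\rhd)}\pi(\succ,(x_i,x_j))\leq\binom{m}{2}R(\succ)$ for all $\succ$; (3) $\sum_\succ\pi(\succ,(x_i,x_j))\leq1$ for all $(x_i,x_j)\in A(\rhd)$; (4) $\sum_\succ\sum_{(x_i,x_j)\in A(\rhd)}\pi(\succ,(x_i,x_j))>\binom{m}{2}-1$.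 *)

theory Defs
  imports Complex_Main
begin

text \<open>A ranking over the candidate set C is a strict linear order on C, represented as
  the relation r (a set of pairs) with (x,y) in r meaning x is ranked above y.
  The set A(r) of the paper is therefore the relation r itself.\<close>

definition rankings :: "'a set \<Rightarrow> 'a rel set" where
  "rankings C = {r. r \<subseteq> C \<times> C \<and> strict_linear_order_on C r}"

definition u :: "'a rel \<Rightarrow> 'a \<Rightarrow> 'a set \<Rightarrow> nat" where
  "u r x X = card {y \<in> X - {x}. (x, y) \<in> r}"

definition ranking_profile :: "'a set \<Rightarrow> ('a rel \<Rightarrow> real) \<Rightarrow> bool" where
  "ranking_profile C R \<longleftrightarrow>
     (\<forall>r \<in> rankings C. 0 \<le> R r \<and> R r \<le> 1) \<and> (\<Sum>r \<in> rankings C. R r) = 1"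

definition subprofile :: "'a set \<Rightarrow> ('a rel \<Rightarrow> real) \<Rightarrow> ('a rel \<Rightarrow> real) \<Rightarrow> bool" where
  "subprofile C S R \<longleftrightarrow> (\<forall>r \<in> rankings C. 0 \<le> S r \<and> S r \<le> 1 \<and> S r \<le> R r)"

definition profile_size :: "'a set \<Rightarrow> ('a rel \<Rightarrow> real) \<Rightarrow> real" where
  "profile_size C S = (\<Sum>r \<in> rankings C. S r)"

definition pair_priceable :: "'a set \<Rightarrow> ('a rel \<Rightarrow> real) \<Rightarrow> 'a rel \<Rightarrow> bool" where
  "pair_priceable C R T \<longleftrightarrow> T \<in> rankings C \<and>
     (\<exists>\<pi> :: 'a rel \<Rightarrow> ('a \<times> 'a) \<Rightarrow> real.
        (\<forall>r \<in> rankings C. \<forall>p \<in> T. 0 \<le> \<pi> r p \<and> \<pi> r p \<le> 1) \<and>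
        (\<forall>r \<in> rankings C. \<forall>(x, y) \<in> T. \<pi> r (x, y) \<le> real (u r x {x, y})) \<and>
        (\<forall>r \<in> rankings C. (\<Sum>p \<in> T. \<pi> r p) \<le> real (card C choose 2) * R r) \<and>
        (\<forall>p \<in> T. (\<Sum>r \<in> rankings C. \<pi> r p) \<le> 1) \<and>
        (\<Sum>r \<in> rankings C. \<Sum>p \<in> T. \<pi> r p) > real (card C choose 2) - 1)"

definition sPJR :: "'a set \<Rightarrow> ('a rel \<Rightarrow> real) \<Rightarrow> 'a rel \<Rightarrow> bool" where
  "sPJR C R T \<longleftrightarrow> (\<forall>S. subprofile C S R \<longrightarrow>
     int (card (T \<inter> \<Union>{r \<in> rankings C. S r > 0}))
       \<ge> \<lfloor>profile_size C S * real (card C choose 2)\<rfloor>)"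

end

theory Submission
  imports Defs
begin

lemma finite_rankings: "finite C \<Longrightarrow> finite (rankings C)"
proof -
  assume "finite C"
  have "rankings C \<subseteq> Pow (C \<times> C)" unfolding rankings_def by auto
  moreover have "finite (Pow (C \<times> C))" using \<open>finite C\<close> by simp
  ultimately show ?thesis by (rule finite_subset)
qed

theorem mainTheorem9:
  fixes C :: "'a set" and R :: "'a rel \<Rightarrow> real" and T :: "'a rel"
  assumes "finite C"
    and "ranking_profile C R"
    and "pair_priceable C R T"
  shows "sPJR C R T"
  unfolding sPJR_def
proof (intro allI impI)
  fix S assume sub: "subprofile C S R"
  define Rk where "Rk = rankings C"
  define Q where "Q = {r \<in> Rk. S r > 0}"
  define Z where "Z = Rk - Q"
  define P where "P = T \<inter> \<Union>Q"
  define N where "N = real (card C choose 2)"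
  have fRk: "finite Rk" using finite_rankings[OF assms(1)] Rk_def by simp
  have TR: "T \<in> Rk" using assms(3) unfolding pair_priceable_def Rk_def by auto
  have fT: "finite T" using TR assms(1) unfolding Rk_def rankings_def
    by (auto intro: finite_subset)
  obtain \<pi> where p1: "\<forall>r \<in> Rk. \<forall>p \<in> T. 0 \<le> \<pi> r p \<and> \<pi> r p \<le> 1"
    and p2: "\<forall>r \<in> Rk. \<forall>(x, y) \<in> T. \<pi> r (x, y) \<le> real (u r x {x, y})"
    and p3: "\<forall>r \<in> Rk. (\<Sum>p \<in> T. \<pi> r p) \<le> N * R r"
    and p4: "\<forall>p \<in> T. (\<Sum>r \<in> Rk. \<pi> r p) \<le> 1"
    and p5: "(\<Sum>r \<in> Rk. \<Sum>p \<in> T. \<pi> r p) > N - 1"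
    using assms(3) unfolding pair_priceable_def Rk_def N_def by blast
  have fP: "finite P" using fT P_def by simp
  have PT: "P \<subseteq> T" using P_def by auto
  have QRk: "Q \<subseteq> Rk" using Q_def by auto
  have zero: "\<pi> r p = 0" if r: "r \<in> Q" and p: "p \<in> T - P" for r p
  proof -
    obtain x y where xy: "p = (x, y)" by fastforce
    have "p \<notin> r" using r p P_def by auto
    hence "{z \<in> {x, y} - {x}. (x, z) \<in> r} = {}" using xy by auto
    hence "u r x {x, y} = 0" unfolding u_def by simp
    hence "\<pi> r p \<le> 0" using p2 r p QRk xy by fastforce
    moreover have "\<pi> r p \<ge> 0" using p1 r p QRk by blast
    ultimately show ?thesis by simp
  qed
  have tot: "(\<Sum>r \<in> Rk. \<Sum>p \<in> T. \<pi> r p) = (\<Sum>p \<in> T. \<Sum>r \<in> Rk. \<pi> r p)"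
    by (rule sum.swap)
  also have "\<dots> = (\<Sum>p \<in> P. \<Sum>r \<in> Rk. \<pi> r p) + (\<Sum>p \<in> T - P. \<Sum>r \<in> Rk. \<pi> r p)"
    using fT PT by (metis add.commute sum.subset_diff)
  finally have tot2: "(\<Sum>r \<in> Rk. \<Sum>p \<in> T. \<pi> r p) = (\<Sum>p \<in> P. \<Sum>r \<in> Rk. \<pi> r p) + (\<Sum>p \<in> T - P. \<Sum>r \<in> Rk. \<pi> r p)" .
  have a: "(\<Sum>p \<in> P. \<Sum>r \<in> Rk. \<pi> r p) \<le> real (card P)"
  proof -
    have "(\<Sum>p \<in> P. \<Sum>r \<in> Rk. \<pi> r p) \<le> (\<Sum>p \<in> P. 1)"
      by (rule sum_mono) (use p4 PT in auto)
    thus ?thesis by simp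
  qed
  have RkQZ: "Rk = Q \<union> Z" "Q \<inter> Z = {}" using Q_def Z_def by auto
  have fQ: "finite Q" and fZ: "finite Z" using fRk RkQZ by auto
  have b1: "(\<Sum>p \<in> T - P. \<Sum>r \<in> Rk. \<pi> r p) = (\<Sum>p \<in> T - P. \<Sum>r \<in> Z. \<pi> r p)"
  proof (rule sum.cong[OF refl])
    fix p assume p: "p \<in> T - P"
    have "(\<Sum>r \<in> Rk. \<pi> r p) = (\<Sum>r \<in> Q. \<pi> r p) + (\<Sum>r \<in> Z. \<pi> r p)"
      using RkQZ fQ fZ by (simp add: sum.union_disjoint)
    also have "(\<Sum>r \<in> Q. \<pi> r p) = 0" using zero p by simp
    finally show "(\<Sum>r \<in> Rk. \<pi> r p) = (\<Sum>r \<in> Z. \<pi> r p)" by simp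
  qed
  have b2: "(\<Sum>p \<in> T - P. \<Sum>r \<in> Z. \<pi> r p) \<le> (\<Sum>p \<in> T. \<Sum>r \<in> Z. \<pi> r p)"
  proof (rule sum_mono2[OF fT])
    show "T - P \<subseteq> T" by auto
    show "\<And>b. b \<in> T - (T - P) \<Longrightarrow> 0 \<le> (\<Sum>r \<in> Z. \<pi> r b)"
      using p1 RkQZ by (intro sum_nonneg) auto
  qed
  have b3: "(\<Sum>p \<in> T. \<Sum>r \<in> Z. \<pi> r p) = (\<Sum>r \<in> Z. \<Sum>p \<in> T. \<pi> r p)"
    by (rule sum.swap)
  have b4: "(\<Sum>r \<in> Z. \<Sum>p \<in> T. \<pi> r p) \<le> (\<Sum>r \<in> Z. N * R r)"
    by (rule sum_mono) (use p3 RkQZ in auto)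
  have Rsum: "(\<Sum>r \<in> Rk. R r) = 1" using assms(2) unfolding ranking_profile_def Rk_def by simp
  have "(\<Sum>r \<in> Rk. R r) = (\<Sum>r \<in> Q. R r) + (\<Sum>r \<in> Z. R r)"
    using RkQZ fQ fZ by (simp add: sum.union_disjoint)
  hence RZ: "(\<Sum>r \<in> Z. R r) = 1 - (\<Sum>r \<in> Q. R r)" using Rsum by simp
  have SQ: "(\<Sum>r \<in> Q. S r) \<le> (\<Sum>r \<in> Q. R r)"
    by (rule sum_mono) (use sub QRk in \<open>auto simp: subprofile_def Rk_def\<close>)
  have "(\<Sum>r \<in> Rk. S r) = (\<Sum>r \<in> Q. S r) + (\<Sum>r \<in> Z. S r)"
    using RkQZ fQ fZ by (simp add: sum.union_disjoint)
  moreover have "(\<Sum>r \<in> Z. S r) = 0"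
    using sub unfolding subprofile_def Z_def Q_def Rk_def
    by (intro sum.neutral) force
  ultimately have SS: "profile_size C S = (\<Sum>r \<in> Q. S r)"
    unfolding profile_size_def Rk_def by simp
  have N0: "N \<ge> 0" unfolding N_def by simp
  have "(\<Sum>r \<in> Z. N * R r) = N * (1 - (\<Sum>r \<in> Q. R r))"
    using RZ by (simp add: sum_distrib_left[symmetric])
  also have "\<dots> \<le> N * (1 - profile_size C S)"
    using SS SQ N0 by (intro mult_left_mono) auto
  finally have b5: "(\<Sum>r \<in> Z. N * R r) \<le> N * (1 - profile_size C S)" .
  have "N - 1 < real (card P) + N * (1 - profile_size C S)"
    using p5 tot2 a b1 b2 b3 b4 b5 by linarith
  hence lt: "profile_size C S * N - 1 < real (card P)" by (simp add: algebra_simps)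
  have "of_int \<lfloor>profile_size C S * N\<rfloor> \<le> profile_size C S * N" by (rule of_int_floor_le)
  hence "of_int \<lfloor>profile_size C S * N\<rfloor> < real (card P) + 1" using lt by linarith
  hence "\<lfloor>profile_size C S * N\<rfloor> < int (card P) + 1"
    by (metis of_int_less_iff of_int_of_nat_eq of_int_1 of_int_add)
  hence "\<lfloor>profile_size C S * N\<rfloor> \<le> int (card P)" by linarith
  thus "int (card (T \<inter> \<Union>{r \<in> rankings C. S r > 0})) \<ge> \<lfloor>profile_size C S * real (card C choose 2)\<rfloor>"
    unfolding P_def Q_def Rk_def N_def by simp
qed

end
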